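(* Fix spins $j_1,\dots,j_4\in\frac12\mathbb{Z}_{\ge0}$ with $J=j_1+j_2+j_3+j_4\in\mathbb{Z}$. Then in $\mathcal{H}_{j_1j_2j_3j_4}$ the states $|S,T\rangle$ are not linearly independent, and all the linear relations among them are generated by the fundamental relation $$(k_{12}+1)(k_{34}+1)\,|S-1,T\rangle-(k_{13}+1)(k_{24}+1)\,|S,T-1\rangle+k_{14}k_{23}\,|S,T\rangle=0,$$ where $k_{ij}=k_{ij}(j_i,S,T)$.
   Context: Spinors: $[z|w\rangle=z_0w_1-z_1w_0$ for $z,w\in\mathbb{C}^2$. $\mathcal{H}_{j_1j_2j_3j_4}$ is the space of holomorphic functions $f(z_1,\dots,z_4)$ on $(\mathbb{C}^2)^4$ that are homogeneous of degree $2j_i$ in $z_i$ and invariant under $z_i\mapsto gz_i$ for all $g\in SU(2)$ (the space of 4-valent $SU(2)$ intertwiners). For integers or half-integers $S,T$ with $S-j_1-j_2\in\mathbb{Z}$ and $T-j_1-j_3\in\mathbb{Z}$, put $U=J-S-T$ and $$k_{12}=j_1+j_2-S,\ k_{34}=j_3+j_4-S,\ k_{13}=j_1+j_3-T,\ k_{24}=j_2+j_4-T,\ k_{14}=j_1+j_4-U,\ k_{23}=j_2+j_3-U.$$ $(S,T)$ is admissible if all $k_{ij}\ge0$. For admissible $(S,T)$, $|S,T\rangle$ is the function $$(z_i|S,T\rangle=\prod_{i<j}\frac{[z_i|z_j\rangle^{k_{ij}}}{k_{ij}!},$$ and $|S,T\rangle:=0$ if $(S,T)$ is not admissible. *)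

theory Defs
  imports Complex_Main
begin

definition bracket :: "complex \<times> complex \<Rightarrow> complex \<times> complex \<Rightarrow> complex" where
  "bracket z w = fst z * snd w - snd z * fst w"

definition Jtot :: "(nat \<Rightarrow> real) \<Rightarrow> real" where
  "Jtot j = j 1 + j 2 + j 3 + j 4"

definition kk :: "(nat \<Rightarrow> real) \<Rightarrow> real \<Rightarrow> real \<Rightarrow> nat \<Rightarrow> nat \<Rightarrow> real" where
  "kk j S T a b =
     (let U = Jtot j - S - T in
      if (a, b) = (1, 2) then j 1 + j 2 - S
      else if (a, b) = (3, 4) then j 3 + j 4 - S
      else if (a, b) = (1, 3) then j 1 + j 3 - T
      else if (a, b) = (2, 4) then j 2 + j 4 - T
      else if (a, b) = (1, 4) then j 1 + j 4 - U
      else if (a, b) = (2, 3) then j 2 + j 3 - U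
      else 0)"

definition in_lattice :: "(nat \<Rightarrow> real) \<Rightarrow> real \<Rightarrow> real \<Rightarrow> bool" where
  "in_lattice j S T \<longleftrightarrow> S - j 1 - j 2 \<in> \<int> \<and> T - j 1 - j 3 \<in> \<int>"

definition admissible :: "(nat \<Rightarrow> real) \<Rightarrow> real \<Rightarrow> real \<Rightarrow> bool" where
  "admissible j S T \<longleftrightarrow> in_lattice j S T \<and>
     (\<forall>a b. 1 \<le> a \<and> a < b \<and> b \<le> 4 \<longrightarrow> kk j S T a b \<ge> 0)"

definition state :: "(nat \<Rightarrow> real) \<Rightarrow> real \<Rightarrow> real \<Rightarrow> (nat \<Rightarrow> complex \<times> complex) \<Rightarrow> complex" where
  "state j S T z =
     (if admissible j S T then
        (\<Prod>a\<in>{1..4::nat}. \<Prod>b\<in>{a<..4::nat}.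
           bracket (z a) (z b) ^ nat \<lfloor>kk j S T a b\<rfloor> / fact (nat \<lfloor>kk j S T a b\<rfloor>))
      else 0)"

definition adm_set :: "(nat \<Rightarrow> real) \<Rightarrow> (real \<times> real) set" where
  "adm_set j = {p. admissible j (fst p) (snd p)}"

definition is_relation :: "(nat \<Rightarrow> real) \<Rightarrow> (real \<times> real \<Rightarrow> complex) \<Rightarrow> bool" where
  "is_relation j c \<longleftrightarrow> (\<forall>p. p \<notin> adm_set j \<longrightarrow> c p = 0) \<and>
     (\<forall>z. (\<Sum>p\<in>adm_set j. c p * state j (fst p) (snd p) z) = 0)"

definition fund :: "(nat \<Rightarrow> real) \<Rightarrow> real \<times> real \<Rightarrow> real \<times> real \<Rightarrow> complex" where
  "fund j q p =
     (let S = fst q; T = snd q in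
       complex_of_real
        ((if p = (S - 1, T) then (kk j S T 1 2 + 1) * (kk j S T 3 4 + 1) else 0)
         - (if p = (S, T - 1) then (kk j S T 1 3 + 1) * (kk j S T 2 4 + 1) else 0)
         + (if p = (S, T) then kk j S T 1 4 * kk j S T 2 3 else 0)))"

text \<open>A relation is generated by the fundamental relations if it is a finite complex linear
  combination of them (each restricted to the admissible pairs, since |S,T> = 0 otherwise).\<close>
definition generated_by_fund :: "(nat \<Rightarrow> real) \<Rightarrow> (real \<times> real \<Rightarrow> complex) \<Rightarrow> bool" where
  "generated_by_fund j c \<longleftrightarrow>
     (\<exists>F a. finite F \<and> (\<forall>q\<in>F. in_lattice j (fst q) (snd q)) \<and>
        c = (\<lambda>p. if p \<in> adm_set j then (\<Sum>q\<in>F. a q * fund j q p) else 0))"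

end

theory Submission imports Defs "HOL-Computational_Algebra.Polynomial" begin

lemma prod6: "(\<Prod>a\<in>{1..4::nat}. \<Prod>b\<in>{a<..4::nat}. g a b) = g 1 2 * g 1 3 * g 1 4 * g 2 3 * g 2 4 * (g 3 4 :: complex)"
proof -
  have A: "{1..4::nat} = {1,2,3,4}" by auto
  have B: "{1<..4::nat} = {2,3,4}" "{2<..4::nat} = {3,4}" "{3<..4::nat} = {4}" "{4<..4::nat} = {}" "{Suc 0<..4::nat} = {2,3,4}" by auto
  show ?thesis apply (subst A) by (simp add: B mult_ac)
qed

lemma all6: "(\<forall>a b. 1 \<le> a \<and> a < b \<and> b \<le> (4::nat) \<longrightarrow> Q a b) \<longleftrightarrow> Q 1 2 \<and> Q 1 3 \<and> Q 1 4 \<and> Q 2 3 \<and> Q 2 4 \<and> Q 3 4"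
proof
  assume "Q 1 2 \<and> Q 1 3 \<and> Q 1 4 \<and> Q 2 3 \<and> Q 2 4 \<and> Q 3 4"
  then show "\<forall>a b. 1 \<le> a \<and> a < b \<and> b \<le> (4::nat) \<longrightarrow> Q a b"
  proof (intro allI impI)
    fix a b :: nat assume h: "Q 1 2 \<and> Q 1 3 \<and> Q 1 4 \<and> Q 2 3 \<and> Q 2 4 \<and> Q 3 4" "1 \<le> a \<and> a < b \<and> b \<le> 4"
    then have "(a = 1 \<and> b = 2) \<or> (a = 1 \<and> b = 3) \<or> (a = 1 \<and> b = 4) \<or> (a = 2 \<and> b = 3) \<or> (a = 2 \<and> b = 4) \<or> (a = 3 \<and> b = 4)" by arith
    then show "Q a b" using h by auto
  qed
qed auto

definition mon :: "(nat \<Rightarrow> complex \<times> complex) \<Rightarrow> nat \<Rightarrow> nat \<Rightarrow> nat \<Rightarrow> nat \<Rightarrow> nat \<Rightarrow> nat \<Rightarrow> complex" where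
  "mon z n12 n34 n13 n24 n14 n23 =
     bracket (z 1) (z 2) ^ n12 / fact n12 * (bracket (z 3) (z 4) ^ n34 / fact n34) *
     (bracket (z 1) (z 3) ^ n13 / fact n13) * (bracket (z 2) (z 4) ^ n24 / fact n24) *
     (bracket (z 1) (z 4) ^ n14 / fact n14) * (bracket (z 2) (z 3) ^ n23 / fact n23)"

lemma sucfact: "of_nat (Suc n) * (w ^ Suc n / fact (Suc n)) = w * (w ^ n / fact n :: complex)"
proof -
  have "fact (Suc n) = (of_nat (Suc n) * fact n :: complex)" by (rule fact_Suc)
  moreover have "(of_nat (Suc n) :: complex) \<noteq> 0" by (rule of_nat_neq_0)
  moreover have "(fact n :: complex) \<noteq> 0" by simp
  ultimately show ?thesis by (simp only: power_Suc) (simp add: field_simps del: of_nat_Suc)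
qed

lemma plucker_bracket: "bracket a b * bracket c d - bracket a c * bracket b d + bracket a d * bracket b c = 0"
  by (simp add: bracket_def algebra_simps)

lemma mon_pl: "of_nat ((n12+1)*(n34+1)) * mon z (Suc n12) (Suc n34) n13 n24 n14 n23
   - of_nat ((n13+1)*(n24+1)) * mon z n12 n34 (Suc n13) (Suc n24) n14 n23
   + of_nat ((n14+1)*(n23+1)) * mon z n12 n34 n13 n24 (Suc n14) (Suc n23) = 0"
proof -
  define f where "f n w = (w ^ n / fact n :: complex)" for n w
  have s: "of_nat (Suc n) * f (Suc n) w = w * f n w" for n w unfolding f_def by (rule sucfact)
  define b12 b34 b13 b24 b14 b23 where "b12 = bracket (z 1) (z 2)" and "b34 = bracket (z 3) (z 4)"
    and "b13 = bracket (z 1) (z 3)" and "b24 = bracket (z 2) (z 4)" and "b14 = bracket (z 1) (z 4)" and "b23 = bracket (z 2) (z 3)"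
  have m: "mon z m12 m34 m13 m24 m14 m23 = f m12 b12 * f m34 b34 * f m13 b13 * f m24 b24 * f m14 b14 * f m23 b23" for m12 m34 m13 m24 m14 m23
    by (simp add: mon_def f_def b12_def b34_def b13_def b24_def b14_def b23_def)
  define R where "R = f n12 b12 * f n34 b34 * f n13 b13 * f n24 b24 * f n14 b14 * f n23 b23"
  have en12: "of_nat ((n12+1)*(n34+1)) = (of_nat (Suc n12) * of_nat (Suc n34) :: complex)" by (simp add: algebra_simps)
  have t1: "of_nat ((n12+1)*(n34+1)) * mon z (Suc n12) (Suc n34) n13 n24 n14 n23 = b12 * b34 * R"
  proof -
    have "of_nat ((n12+1)*(n34+1)) * mon z (Suc n12) (Suc n34) n13 n24 n14 n23
       = (of_nat (Suc n12) * f (Suc n12) b12) * (of_nat (Suc n34) * f (Suc n34) b34) * f n13 b13 * f n24 b24 * f n14 b14 * f n23 b23"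
      unfolding en12 m by (simp only: mult_ac)
    also have "\<dots> = b12 * b34 * R" by (simp only: s) (simp add: R_def mult_ac)
    finally show ?thesis .
  qed
  have en13: "of_nat ((n13+1)*(n24+1)) = (of_nat (Suc n13) * of_nat (Suc n24) :: complex)" by (simp add: algebra_simps)
  have t2: "of_nat ((n13+1)*(n24+1)) * mon z n12 n34 (Suc n13) (Suc n24) n14 n23 = b13 * b24 * R"
  proof -
    have "of_nat ((n13+1)*(n24+1)) * mon z n12 n34 (Suc n13) (Suc n24) n14 n23
       = f n12 b12 * f n34 b34 * (of_nat (Suc n13) * f (Suc n13) b13) * (of_nat (Suc n24) * f (Suc n24) b24) * f n14 b14 * f n23 b23"
      unfolding en13 m by (simp only: mult_ac)
    also have "\<dots> = b13 * b24 * R" by (simp only: s) (simp add: R_def mult_ac)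
    finally show ?thesis .
  qed
  have en14: "of_nat ((n14+1)*(n23+1)) = (of_nat (Suc n14) * of_nat (Suc n23) :: complex)" by (simp add: algebra_simps)
  have t3: "of_nat ((n14+1)*(n23+1)) * mon z n12 n34 n13 n24 (Suc n14) (Suc n23) = b14 * b23 * R"
  proof -
    have "of_nat ((n14+1)*(n23+1)) * mon z n12 n34 n13 n24 (Suc n14) (Suc n23)
       = f n12 b12 * f n34 b34 * f n13 b13 * f n24 b24 * (of_nat (Suc n14) * f (Suc n14) b14) * (of_nat (Suc n23) * f (Suc n23) b23)"
      unfolding en14 m by (simp only: mult_ac)
    also have "\<dots> = b14 * b23 * R" by (simp only: s) (simp add: R_def mult_ac)
    finally show ?thesis .
  qed
  have "b12 * b34 - b13 * b24 + b14 * b23 = 0"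
    unfolding b12_def b34_def b13_def b24_def b14_def b23_def by (rule plucker_bracket)
  then have "(b12 * b34 - b13 * b24 + b14 * b23) * R = 0" by simp
  then show ?thesis unfolding t1 t2 t3 by (simp add: algebra_simps)
qed

definition Mz :: "(nat \<Rightarrow> complex \<times> complex) \<Rightarrow> int \<Rightarrow> int \<Rightarrow> int \<Rightarrow> int \<Rightarrow> int \<Rightarrow> int \<Rightarrow> complex" where
  "Mz z k12 k34 k13 k24 k14 k23 = (if k12 \<ge> 0 \<and> k34 \<ge> 0 \<and> k13 \<ge> 0 \<and> k24 \<ge> 0 \<and> k14 \<ge> 0 \<and> k23 \<ge> 0
     then mon z (nat k12) (nat k34) (nat k13) (nat k24) (nat k14) (nat k23) else 0)"

lemma Mz_pl: "of_int ((k12+1)*(k34+1)) * Mz z (k12+1) (k34+1) k13 k24 (k14-1) (k23-1)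
   - of_int ((k13+1)*(k24+1)) * Mz z k12 k34 (k13+1) (k24+1) (k14-1) (k23-1)
   + of_int (k14*k23) * Mz z k12 k34 k13 k24 k14 k23 = 0"
proof (cases "k12 \<ge> 0 \<and> k34 \<ge> 0 \<and> k13 \<ge> 0 \<and> k24 \<ge> 0 \<and> k14 \<ge> 1 \<and> k23 \<ge> 1")
  case True
  then obtain n12 n34 n13 n24 n14 n23 where
    h: "k12 = int n12" "k34 = int n34" "k13 = int n13" "k24 = int n24" "k14 = int n14 + 1" "k23 = int n23 + 1"
    by (metis add.commute nonneg_int_cases le_add_diff_inverse zle_iff_zadd)
  have "of_int ((k12+1)*(k34+1)) = (of_nat ((n12+1)*(n34+1)) :: complex)" by (simp add: h algebra_simps)
  moreover have "of_int ((k13+1)*(k24+1)) = (of_nat ((n13+1)*(n24+1)) :: complex)" by (simp add: h algebra_simps)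
  moreover have "of_int (k14*k23) = (of_nat ((n14+1)*(n23+1)) :: complex)" by (simp add: h algebra_simps)
  moreover have "Mz z (k12+1) (k34+1) k13 k24 (k14-1) (k23-1) = mon z (Suc n12) (Suc n34) n13 n24 n14 n23"
    by (simp add: h Mz_def nat_add_distrib)
  moreover have "Mz z k12 k34 (k13+1) (k24+1) (k14-1) (k23-1) = mon z n12 n34 (Suc n13) (Suc n24) n14 n23"
    by (simp add: h Mz_def nat_add_distrib)
  moreover have "Mz z k12 k34 k13 k24 k14 k23 = mon z n12 n34 n13 n24 (Suc n14) (Suc n23)"
    by (simp add: h Mz_def nat_add_distrib)
  ultimately show ?thesis using mon_pl[of n12 n34 z n13 n24 n14 n23] by simp
next
  case False
  have t1: "of_int ((k12+1)*(k34+1)) * Mz z (k12+1) (k34+1) k13 k24 (k14-1) (k23-1) = 0"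
  proof (cases "(k12+1)*(k34+1) = 0")
    case False2: False
    then have "k12 \<noteq> -1" "k34 \<noteq> -1" by auto
    then show ?thesis using False by (auto simp: Mz_def)
  qed (metis mult_zero_left of_int_0)
  have t2: "of_int ((k13+1)*(k24+1)) * Mz z k12 k34 (k13+1) (k24+1) (k14-1) (k23-1) = 0"
  proof (cases "(k13+1)*(k24+1) = 0")
    case False2: False
    then have "k13 \<noteq> -1" "k24 \<noteq> -1" by auto
    then show ?thesis using False by (auto simp: Mz_def)
  qed (metis mult_zero_left of_int_0)
  have t3: "of_int (k14*k23) * Mz z k12 k34 k13 k24 k14 k23 = 0"
  proof (cases "k14*k23 = 0")
    case False2: False
    then have "k14 \<noteq> 0" "k23 \<noteq> 0" by auto
    then show ?thesis using False by (auto simp: Mz_def)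
  qed (metis mult_zero_left of_int_0)
  show ?thesis by (simp only: t1 t2 t3) simp
qed


locale LL =
  fixes j :: "nat \<Rightarrow> real" and d1 d2 d3 :: nat and Ji :: int
  assumes e1: "2 * j 1 = real d1" and e2: "2 * j 2 = real d2" and e3: "2 * j 3 = real d3"
    and eJ: "Jtot j = real_of_int Ji"
begin

definition K12 :: "int \<times> int \<Rightarrow> int" where "K12 p = fst p"
definition K34 :: "int \<times> int \<Rightarrow> int" where "K34 p = Ji - int d1 - int d2 + fst p"
definition K13 :: "int \<times> int \<Rightarrow> int" where "K13 p = snd p"
definition K24 :: "int \<times> int \<Rightarrow> int" where "K24 p = Ji - int d1 - int d3 + snd p"
definition K14 :: "int \<times> int \<Rightarrow> int" where "K14 p = int d1 - fst p - snd p"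
definition K23 :: "int \<times> int \<Rightarrow> int" where "K23 p = int d1 + int d2 + int d3 - Ji - fst p - snd p"

lemmas Kdefs = K12_def K34_def K13_def K24_def K14_def K23_def

definition good :: "int \<times> int \<Rightarrow> bool" where
  "good p \<longleftrightarrow> K12 p \<ge> 0 \<and> K34 p \<ge> 0 \<and> K13 p \<ge> 0 \<and> K24 p \<ge> 0 \<and> K14 p \<ge> 0 \<and> K23 p \<ge> 0"

definition Good :: "(int \<times> int) set" where "Good = {p. good p}"

definition P :: "int \<times> int \<Rightarrow> real \<times> real" where
  "P p = (j 1 + j 2 - of_int (fst p), j 1 + j 3 - of_int (snd p))"

definition stI :: "(nat \<Rightarrow> complex \<times> complex) \<Rightarrow> int \<times> int \<Rightarrow> complex" where
  "stI z p = Mz z (K12 p) (K34 p) (K13 p) (K24 p) (K14 p) (K23 p)"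

lemma inj_P: "inj P"
  unfolding inj_def P_def by (auto simp: prod_eq_iff)

lemma kkP:
  "kk j (fst (P p)) (snd (P p)) 1 2 = of_int (K12 p)"
  "kk j (fst (P p)) (snd (P p)) 3 4 = of_int (K34 p)"
  "kk j (fst (P p)) (snd (P p)) 1 3 = of_int (K13 p)"
  "kk j (fst (P p)) (snd (P p)) 2 4 = of_int (K24 p)"
  "kk j (fst (P p)) (snd (P p)) 1 4 = of_int (K14 p)"
  "kk j (fst (P p)) (snd (P p)) 2 3 = of_int (K23 p)"
  using e1 e2 e3 eJ by (simp_all add: kk_def Let_def P_def Kdefs Jtot_def; linarith)+

lemma lattice_P: "in_lattice j S T \<longleftrightarrow> (S, T) \<in> range P"
proof
  assume "in_lattice j S T"
  then obtain m n where m: "S - j 1 - j 2 = of_int m" and n: "T - j 1 - j 3 = of_int n"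
    unfolding in_lattice_def by (auto elim!: Ints_cases)
  have "(S, T) = P (-m, -n)" using m n by (simp add: P_def; linarith)
  then show "(S, T) \<in> range P" by blast
next
  assume "(S, T) \<in> range P"
  then obtain p where "(S, T) = P p" by blast
  then have "S - j 1 - j 2 = of_int (- fst p)" "T - j 1 - j 3 = of_int (- snd p)" by (simp_all add: P_def)
  then show "in_lattice j S T" unfolding in_lattice_def by (metis Ints_of_int)
qed

lemma adm_P: "admissible j (fst (P p)) (snd (P p)) \<longleftrightarrow> good p"
proof -
  have "in_lattice j (fst (P p)) (snd (P p))" using lattice_P by simp
  then show ?thesis unfolding admissible_def all6 kkP good_def by auto
qed

lemma adm_set_P: "adm_set j = P ` Good"
proof
  show "adm_set j \<subseteq> P ` Good"
  proof
    fix x assume "x \<in> adm_set j"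
    then have a: "admissible j (fst x) (snd x)" by (simp add: adm_set_def)
    then have "in_lattice j (fst x) (snd x)" by (simp add: admissible_def)
    then obtain p where p: "x = P p" using lattice_P by (metis prod.collapse rangeE)
    then show "x \<in> P ` Good" using a adm_P by (auto simp: Good_def)
  qed
  show "P ` Good \<subseteq> adm_set j" using adm_P by (auto simp: Good_def adm_set_def)
qed

lemma state_P: "state j (fst (P p)) (snd (P p)) z = stI z p"
  unfolding state_def adm_P prod6 kkP stI_def Mz_def good_def mon_def
  by (simp add: mult_ac)

lemma finite_Good: "finite Good"
proof -
  have "Good \<subseteq> {0..int d1} \<times> {0..int d1}" by (auto simp: Good_def good_def Kdefs)
  then show ?thesis by (rule finite_subset) simp
qed

definition fundI :: "int \<times> int \<Rightarrow> int \<times> int \<Rightarrow> complex" where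
  "fundI q p = of_int ((if p = (fst q + 1, snd q) then (K12 q + 1) * (K34 q + 1) else 0)
     - (if p = (fst q, snd q + 1) then (K13 q + 1) * (K24 q + 1) else 0)
     + (if p = q then K14 q * K23 q else 0))"

lemma P_shift: "P (fst q + 1, snd q) = (fst (P q) - 1, snd (P q))" "P (fst q, snd q + 1) = (fst (P q), snd (P q) - 1)"
  by (simp_all add: P_def)

lemma fund_P: "fund j (P q) (P p) = fundI q p"
proof -
  have i1: "(P p = (fst (P q) - 1, snd (P q))) \<longleftrightarrow> p = (fst q + 1, snd q)"
    using inj_P P_shift(1)[of q] by (metis injD)
  have i2: "(P p = (fst (P q), snd (P q) - 1)) \<longleftrightarrow> p = (fst q, snd q + 1)"
    using inj_P P_shift(2)[of q] by (metis injD)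
  have i3: "(P p = (fst (P q), snd (P q))) \<longleftrightarrow> p = q"
    using inj_P by (metis injD prod.collapse)
  show ?thesis unfolding fund_def Let_def i1 i2 i3 kkP fundI_def by simp
qed

lemma stI_pl: "of_int ((K12 q + 1)*(K34 q + 1)) * stI z (fst q + 1, snd q)
   - of_int ((K13 q + 1)*(K24 q + 1)) * stI z (fst q, snd q + 1)
   + of_int (K14 q * K23 q) * stI z q = 0"
proof -
  have a: "stI z (fst q + 1, snd q) = Mz z (K12 q + 1) (K34 q + 1) (K13 q) (K24 q) (K14 q - 1) (K23 q - 1)"
    unfolding stI_def by (simp add: Kdefs algebra_simps)
  have b: "stI z (fst q, snd q + 1) = Mz z (K12 q) (K34 q) (K13 q + 1) (K24 q + 1) (K14 q - 1) (K23 q - 1)"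
    unfolding stI_def by (simp add: Kdefs algebra_simps)
  show ?thesis unfolding a b using Mz_pl unfolding stI_def by blast
qed


lemma stI_out: "\<not> good p \<Longrightarrow> stI z p = 0"
  by (auto simp: stI_def Mz_def good_def)

lemma mem_Good: "p \<in> Good \<longleftrightarrow> good p" by (simp add: Good_def)

definition relI :: "(int \<times> int \<Rightarrow> complex) \<Rightarrow> bool" where
  "relI e \<longleftrightarrow> (\<forall>p. p \<notin> Good \<longrightarrow> e p = 0) \<and> (\<forall>z. (\<Sum>p\<in>Good. e p * stI z p) = 0)"

definition frI :: "int \<times> int \<Rightarrow> int \<times> int \<Rightarrow> complex" where
  "frI q p = (if p \<in> Good then fundI q p else 0)"

definition genI :: "(int \<times> int \<Rightarrow> complex) \<Rightarrow> bool" where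
  "genI e \<longleftrightarrow> (\<exists>F a. finite F \<and> e = (\<lambda>p. if p \<in> Good then (\<Sum>q\<in>F. a q * fundI q p) else 0))"

lemma fund_rel: "(\<Sum>p\<in>Good. fundI q p * stI z p) = 0"
proof -
  define q1 where "q1 = (fst q + 1, snd q)"
  define q2 where "q2 = (fst q, snd q + 1)"
  define T3 where "T3 = {q1, q2, q}"
  have d: "q1 \<noteq> q2" "q1 \<noteq> q" "q2 \<noteq> q" by (auto simp: q1_def q2_def prod_eq_iff)
  let ?h = "\<lambda>p. fundI q p * stI z p"
  have "(\<Sum>p\<in>Good. ?h p) = (\<Sum>p\<in>Good \<union> T3. ?h p)"
    by (rule sum.mono_neutral_left) (auto simp: finite_Good T3_def stI_out mem_Good)
  also have "\<dots> = (\<Sum>p\<in>T3. ?h p)"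
  proof (rule sum.mono_neutral_right)
    show "finite (Good \<union> T3)" using finite_Good by (simp add: T3_def)
    show "T3 \<subseteq> Good \<union> T3" by blast
    show "\<forall>i\<in>Good \<union> T3 - T3. ?h i = 0"
    proof
      fix i assume "i \<in> Good \<union> T3 - T3"
      then have "i \<noteq> q1" "i \<noteq> q2" "i \<noteq> q" by (auto simp: T3_def)
      then have "fundI q i = 0" by (simp add: fundI_def q1_def q2_def)
      then show "?h i = 0" by simp
    qed
  qed
  also have "\<dots> = ?h q1 + ?h q2 + ?h q" using d by (simp add: T3_def)
  also have "\<dots> = 0" using stI_pl[of q z] d unfolding fundI_def q1_def q2_def by (simp add: prod_eq_iff)
  finally show ?thesis .
qed

lemma gen_rel: "genI e \<Longrightarrow> relI e"
proof -
  assume "genI e"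
  then obtain F a where F: "finite F" and e: "e = (\<lambda>p. if p \<in> Good then (\<Sum>q\<in>F. a q * fundI q p) else 0)"
    unfolding genI_def by blast
  have "(\<Sum>p\<in>Good. e p * stI z p) = 0" for z
  proof -
    have "(\<Sum>p\<in>Good. e p * stI z p) = (\<Sum>p\<in>Good. \<Sum>q\<in>F. a q * (fundI q p * stI z p))"
      by (rule sum.cong) (auto simp: e sum_distrib_right mult.assoc)
    also have "\<dots> = (\<Sum>q\<in>F. a q * (\<Sum>p\<in>Good. fundI q p * stI z p))"
      by (subst sum.swap) (simp add: sum_distrib_left)
    also have "\<dots> = 0" by (simp add: fund_rel)
    finally show ?thesis .
  qed
  then show "relI e" unfolding relI_def by (auto simp: e)
qed

lemma gen_add: "genI g \<Longrightarrow> genI (\<lambda>p. g p + \<kappa> * frI q p)"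
proof -
  assume "genI g"
  then obtain F a where F: "finite F" and g: "g = (\<lambda>p. if p \<in> Good then (\<Sum>q\<in>F. a q * fundI q p) else 0)"
    unfolding genI_def by blast
  define a' where "a' x = (if x \<in> F then a x else 0) + (if x = q then \<kappa> else 0)" for x
  have "(\<Sum>x\<in>insert q F. a' x * fundI x p) = (\<Sum>x\<in>F. a x * fundI x p) + \<kappa> * fundI q p" for p
  proof -
    have "(\<Sum>x\<in>insert q F. a' x * fundI x p) = (\<Sum>x\<in>insert q F. (if x \<in> F then a x * fundI x p else 0))
        + (\<Sum>x\<in>insert q F. (if x = q then \<kappa> * fundI x p else 0))"
      unfolding sum.distrib[symmetric] by (rule sum.cong) (auto simp: a'_def distrib_right)
    also have "(\<Sum>x\<in>insert q F. (if x \<in> F then a x * fundI x p else 0)) = (\<Sum>x\<in>F. a x * fundI x p)"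
    proof -
      have "insert q F \<inter> F = F" by blast
      then show ?thesis using F by (simp add: sum.inter_restrict[symmetric])
    qed
    also have "(\<Sum>x\<in>insert q F. (if x = q then \<kappa> * fundI x p else 0)) = \<kappa> * fundI q p"
      using F by (simp add: sum.delta)
    finally show ?thesis .
  qed
  then have "(\<lambda>p. g p + \<kappa> * frI q p) = (\<lambda>p. if p \<in> Good then (\<Sum>x\<in>insert q F. a' x * fundI x p) else 0)"
    by (auto simp: g frI_def)
  then show ?thesis unfolding genI_def using F by blast
qed

lemma gen0: "genI (\<lambda>_. 0)"
  unfolding genI_def by (rule exI[of _ "{}"]) (simp add: fun_eq_iff)


definition nb :: "int \<times> int \<Rightarrow> bool" where "nb p \<longleftrightarrow> p \<in> Good \<and> K14 p * K23 p \<noteq> 0"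
definition Dset :: "(int \<times> int \<Rightarrow> complex) \<Rightarrow> (int \<times> int) set" where "Dset e = {p. nb p \<and> e p \<noteq> 0}"
definition wt :: "int \<times> int \<Rightarrow> nat" where "wt p = 3 ^ nat (K14 p)"
definition mu :: "(int \<times> int \<Rightarrow> complex) \<Rightarrow> nat" where "mu e = (\<Sum>p\<in>Dset e. wt p)"

lemma finite_Dset: "finite (Dset e)"
  by (rule finite_subset[OF _ finite_Good]) (auto simp: Dset_def nb_def)

lemma reduce: "(\<forall>p. p \<notin> Good \<longrightarrow> e p = 0) \<Longrightarrow> \<exists>g. genI g \<and> (\<forall>p. nb p \<longrightarrow> e p = g p)"
proof (induction "mu e" arbitrary: e rule: less_induct)
  case less
  show ?case
  proof (cases "Dset e = {}")
    case True
    then have "\<forall>p. nb p \<longrightarrow> e p = 0" by (auto simp: Dset_def)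
    then show ?thesis using gen0 by auto
  next
    case False
    then obtain q where q: "q \<in> Dset e" by blast
    then have qG: "q \<in> Good" and C: "K14 q * K23 q \<noteq> 0" and eq: "e q \<noteq> 0"
      by (auto simp: Dset_def nb_def)
    have k: "K14 q \<ge> 1" using qG C by (auto simp: mem_Good good_def)
    define q1 where "q1 = (fst q + 1, snd q)"
    define q2 where "q2 = (fst q, snd q + 1)"
    have dq: "q1 \<noteq> q2" "q1 \<noteq> q" "q2 \<noteq> q" by (auto simp: q1_def q2_def prod_eq_iff)
    define \<kappa> where "\<kappa> = e q / of_int (K14 q * K23 q)"
    define e' where "e' p = e p - \<kappa> * frI q p" for p
    have e'out: "\<forall>p. p \<notin> Good \<longrightarrow> e' p = 0" using less.prems by (simp add: e'_def frI_def)
    have "frI q q = of_int (K14 q * K23 q)" using qG dq by (simp add: frI_def fundI_def q1_def q2_def)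
    then have e'q: "e' q = 0" using C by (simp add: e'_def \<kappa>_def)
    have e'o: "e' p = e p" if "p \<noteq> q1" "p \<noteq> q2" "p \<noteq> q" for p
      using that by (simp add: e'_def frI_def fundI_def q1_def q2_def)
    have sub: "Dset e' \<subseteq> (Dset e - {q}) \<union> {q1, q2}"
    proof
      fix p assume p: "p \<in> Dset e'"
      show "p \<in> (Dset e - {q}) \<union> {q1, q2}"
      proof (cases "p = q1 \<or> p = q2")
        case False
        moreover have "p \<noteq> q" using p e'q by (auto simp: Dset_def)
        ultimately show ?thesis using p e'o by (auto simp: Dset_def)
      qed auto
    qed
    have w12: "wt q1 + wt q2 < wt q"
    proof -
      have "nat (K14 q1) = nat (K14 q) - 1" "nat (K14 q2) = nat (K14 q) - 1"
        using k by (simp_all add: q1_def q2_def Kdefs nat_diff_distrib)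
      moreover have "2 * 3 ^ (n - 1) < (3::nat) ^ n" if n1: "n \<ge> 1" for n
      proof -
        obtain m where "n = Suc m" using n1 by (cases n) auto
        then show ?thesis by simp
      qed
      moreover have "nat (K14 q) \<ge> 1" using k by simp
      ultimately show ?thesis unfolding wt_def by (metis mult_2)
    qed
    have "mu e' \<le> (\<Sum>p\<in>(Dset e - {q}) \<union> {q1, q2}. wt p)"
      unfolding mu_def by (rule sum_mono2) (use sub finite_Dset in auto)
    also have "\<dots> \<le> (\<Sum>p\<in>Dset e - {q}. wt p) + (\<Sum>p\<in>{q1, q2}. wt p)"
    proof -
      have "(\<Sum>p\<in>(Dset e - {q}) \<union> {q1, q2}. wt p) = (\<Sum>p\<in>Dset e - {q}. wt p) + (\<Sum>p\<in>{q1, q2}. wt p) - (\<Sum>p\<in>(Dset e - {q}) \<inter> {q1, q2}. wt p)"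
        by (rule sum_Un_nat) (simp_all add: finite_Dset)
      then show ?thesis by linarith
    qed
    also have "(\<Sum>p\<in>{q1, q2}. wt p) = wt q1 + wt q2" using dq by simp
    also have "(\<Sum>p\<in>Dset e - {q}. wt p) = mu e - wt q" using q by (simp add: mu_def sum_diff1_nat)
    finally have "mu e' \<le> mu e - wt q + (wt q1 + wt q2)" .
    moreover have "wt q \<le> mu e" unfolding mu_def by (rule member_le_sum) (use q finite_Dset in auto)
    ultimately have "mu e' < mu e" using w12 by linarith
    then obtain g' where g': "genI g'" "\<forall>p. nb p \<longrightarrow> e' p = g' p" using less.hyps e'out by blast
    define g where "g p = g' p + \<kappa> * frI q p" for p
    have "genI g" unfolding g_def using gen_add[OF g'(1)] by blast
    moreover have "\<forall>p. nb p \<longrightarrow> e p = g p"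
    proof (intro allI impI)
      fix p assume "nb p"
      then have "e' p = g' p" using g'(2) by blast
      then show "e p = g p" by (simp add: g_def e'_def algebra_simps)
    qed
    ultimately show ?thesis by blast
  qed
qed


definition zx :: "complex \<Rightarrow> nat \<Rightarrow> complex \<times> complex" where
  "zx x i = (if i = 1 then (1, 0) else if i = 2 then (1, x) else if i = 3 then (1, 1) else (0, 1))"

definition wI :: "int \<times> int \<Rightarrow> complex" where
  "wI p = inverse (fact (nat (K12 p)) * fact (nat (K34 p)) * fact (nat (K13 p)) * fact (nat (K24 p))
     * fact (nat (K14 p)) * fact (nat (K23 p)))"

lemma stI_zx: "good p \<Longrightarrow> stI (zx x) p = x ^ nat (K12 p) * (1 - x) ^ nat (K23 p) * wI p"
  by (simp add: stI_def Mz_def good_def mon_def bracket_def zx_def wI_def field_simps)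

lemma wI_nz: "wI p \<noteq> 0"
  by (simp add: wI_def)

lemma indep: assumes rel: "relI d" and nbz: "\<forall>p. nb p \<longrightarrow> d p = 0" shows "d p0 = 0"
proof (cases "p0 \<in> Good \<and> \<not> nb p0")
  case False
  then show ?thesis using rel nbz unfolding relI_def by blast
next
  case True
  define Bs where "Bs = {p \<in> Good. \<not> nb p}"
  define m where "m = min (int d1) (int d1 + int d2 + int d3 - Ji)"
  define N where "N = nat (int d1 + int d2 + int d3 - Ji - m)"
  have p0B: "p0 \<in> Bs" using True by (simp add: Bs_def)
  have BsG: "Bs \<subseteq> Good" by (auto simp: Bs_def)
  have finB: "finite Bs" using finite_subset[OF BsG finite_Good] .
  have sumB: "fst p + snd p = m" if "p \<in> Bs" for p
  proof -
    have "good p" "K14 p * K23 p = 0" using that by (auto simp: Bs_def nb_def mem_Good)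
    then show ?thesis unfolding good_def Kdefs m_def by (auto simp: mult_eq_0_iff)
  qed
  have K23B: "nat (K23 p) = N" if "p \<in> Bs" for p using sumB[OF that] by (simp add: K23_def N_def)
  have fstB: "fst p \<ge> 0" if "p \<in> Bs" for p using that by (auto simp: Bs_def mem_Good good_def K12_def)
  define Q where "Q = (\<Sum>p\<in>Bs. monom (d p * wI p) (nat (fst p)))"
  have "poly (Q * [:1, -1:] ^ N) x = 0" for x
  proof -
    have "0 = (\<Sum>p\<in>Good. d p * stI (zx x) p)" using rel unfolding relI_def by simp
    also have "\<dots> = (\<Sum>p\<in>Bs. d p * stI (zx x) p)"
    proof (rule sum.mono_neutral_right)
      show "finite Good" by (rule finite_Good)
      show "Bs \<subseteq> Good" by (rule BsG)
      show "\<forall>i\<in>Good - Bs. d i * stI (zx x) i = 0"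
      proof
        fix i assume "i \<in> Good - Bs"
        then have "nb i" by (simp add: Bs_def)
        then have "d i = 0" using nbz by blast
        then show "d i * stI (zx x) i = 0" by simp
      qed
    qed
    also have "\<dots> = (\<Sum>p\<in>Bs. d p * wI p * x ^ nat (fst p) * (1 - x) ^ N)"
      by (rule sum.cong) (auto simp: stI_zx Bs_def mem_Good K23B[simplified Bs_def] K12_def)
    also have "\<dots> = poly Q x * (1 - x) ^ N"
      by (simp add: Q_def poly_sum poly_monom sum_distrib_right)
    also have "\<dots> = poly (Q * [:1, -1:] ^ N) x" by simp
    finally show ?thesis by simp
  qed
  then have "Q * [:1, -1:] ^ N = 0" using poly_all_0_iff_0 by blast
  moreover have "[:1, -1:] ^ N \<noteq> (0 :: complex poly)" by simp
  ultimately have Q0: "Q = 0" by simp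
  have "coeff Q (nat (fst p0)) = (\<Sum>p\<in>Bs. if p = p0 then d p * wI p else 0)"
  proof -
    have "coeff Q (nat (fst p0)) = (\<Sum>p\<in>Bs. if nat (fst p) = nat (fst p0) then d p * wI p else 0)"
      by (simp add: Q_def coeff_sum)
    also have "\<dots> = (\<Sum>p\<in>Bs. if p = p0 then d p * wI p else 0)"
    proof (rule sum.cong)
      fix p assume p: "p \<in> Bs"
      have "nat (fst p) = nat (fst p0) \<longleftrightarrow> p = p0"
        using sumB[OF p] sumB[OF p0B] fstB[OF p] fstB[OF p0B] by (auto simp: prod_eq_iff)
      then show "(if nat (fst p) = nat (fst p0) then d p * wI p else 0) = (if p = p0 then d p * wI p else 0)" by simp
    qed simp
    finally show ?thesis .
  qed
  also have "\<dots> = d p0 * wI p0" using p0B finB by (simp add: sum.delta')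
  finally have "d p0 * wI p0 = 0" using Q0 by simp
  then show ?thesis using wI_nz by simp
qed


lemma rel_gen: assumes "relI e" shows "genI e"
proof -
  have eo: "\<forall>p. p \<notin> Good \<longrightarrow> e p = 0" using assms by (simp add: relI_def)
  obtain g where g: "genI g" "\<forall>p. nb p \<longrightarrow> e p = g p" using reduce[OF eo] by blast
  have rg: "relI g" using gen_rel[OF g(1)] .
  define dd where "dd p = e p - g p" for p
  have "relI dd"
  proof -
    have "(\<Sum>p\<in>Good. dd p * stI z p) = 0" for z
    proof -
      have "(\<Sum>p\<in>Good. dd p * stI z p) = (\<Sum>p\<in>Good. e p * stI z p) - (\<Sum>p\<in>Good. g p * stI z p)"
        by (simp add: dd_def left_diff_distrib sum_subtractf)
      then show ?thesis using assms rg by (simp add: relI_def)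
    qed
    then show ?thesis using assms rg by (simp add: relI_def dd_def)
  qed
  moreover have "\<forall>p. nb p \<longrightarrow> dd p = 0" using g(2) by (simp add: dd_def)
  ultimately have "dd p = 0" for p using indep by blast
  then have "e = g" by (simp add: fun_eq_iff dd_def)
  then show ?thesis using g(1) by simp
qed

lemma relI_genI: "relI e \<longleftrightarrow> genI e"
  using rel_gen gen_rel by blast

lemma rel_iff: "is_relation j c \<longleftrightarrow> (\<forall>x. x \<notin> P ` Good \<longrightarrow> c x = 0) \<and> relI (c \<circ> P)"
proof -
  have inj: "inj_on P Good" using inj_P by (rule inj_on_subset) simp
  have s: "(\<Sum>x\<in>adm_set j. c x * state j (fst x) (snd x) z) = (\<Sum>p\<in>Good. (c \<circ> P) p * stI z p)" for z
    unfolding adm_set_P by (simp add: sum.reindex[OF inj] state_P)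
  have o: "(\<forall>x. x \<notin> P ` Good \<longrightarrow> c x = 0) \<Longrightarrow> (\<forall>p. p \<notin> Good \<longrightarrow> (c \<circ> P) p = 0)"
  proof (intro allI impI)
    fix p assume H: "\<forall>x. x \<notin> P ` Good \<longrightarrow> c x = 0" and p: "p \<notin> Good"
    then have "P p \<notin> P ` Good" using inj_P by (simp add: inj_image_mem_iff)
    then have "c (P p) = 0" using H by blast
    then show "(c \<circ> P) p = 0" by simp
  qed
  show ?thesis unfolding is_relation_def relI_def s unfolding adm_set_P using o by blast
qed

lemma gen_iff: "generated_by_fund j c \<longleftrightarrow> (\<forall>x. x \<notin> P ` Good \<longrightarrow> c x = 0) \<and> genI (c \<circ> P)"
proof
  assume "generated_by_fund j c"
  then obtain F a where F: "finite F" "\<forall>q\<in>F. in_lattice j (fst q) (snd q)"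
    and c: "c = (\<lambda>p. if p \<in> adm_set j then (\<Sum>q\<in>F. a q * fund j q p) else 0)"
    unfolding generated_by_fund_def by blast
  have FP: "F \<subseteq> range P" using F(2) lattice_P by auto
  define F' where "F' = P -` F"
  have fF': "finite F'" unfolding F'_def using F(1) inj_P by (simp add: finite_vimageI)
  have FF': "F = P ` F'" unfolding F'_def using FP by auto
  have injF: "inj_on P F'" using inj_P by (rule inj_on_subset) simp
  have "(c \<circ> P) = (\<lambda>p. if p \<in> Good then (\<Sum>q\<in>F'. (a \<circ> P) q * fundI q p) else 0)"
  proof
    fix p
    have "P p \<in> adm_set j \<longleftrightarrow> p \<in> Good" unfolding adm_set_P using inj_P by (simp add: inj_image_mem_iff)
    moreover have "(\<Sum>q\<in>F. a q * fund j q (P p)) = (\<Sum>q\<in>F'. (a \<circ> P) q * fundI q p)"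
      unfolding FF' by (simp add: sum.reindex[OF injF] fund_P)
    ultimately show "(c \<circ> P) p = (if p \<in> Good then (\<Sum>q\<in>F'. (a \<circ> P) q * fundI q p) else 0)"
      by (simp add: c)
  qed
  then have "genI (c \<circ> P)" unfolding genI_def using fF' by blast
  moreover have "\<forall>x. x \<notin> P ` Good \<longrightarrow> c x = 0" by (simp add: c adm_set_P)
  ultimately show "(\<forall>x. x \<notin> P ` Good \<longrightarrow> c x = 0) \<and> genI (c \<circ> P)" by blast
next
  assume h: "(\<forall>x. x \<notin> P ` Good \<longrightarrow> c x = 0) \<and> genI (c \<circ> P)"
  then obtain F' a' where fF': "finite F'" and cP: "c \<circ> P = (\<lambda>p. if p \<in> Good then (\<Sum>q\<in>F'. a' q * fundI q p) else 0)"
    unfolding genI_def by blast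
  define F where "F = P ` F'"
  define a where "a x = a' (inv P x)" for x
  have injF: "inj_on P F'" using inj_P by (rule inj_on_subset) simp
  have "c = (\<lambda>x. if x \<in> adm_set j then (\<Sum>q\<in>F. a q * fund j q x) else 0)"
  proof
    fix x
    show "c x = (if x \<in> adm_set j then (\<Sum>q\<in>F. a q * fund j q x) else 0)"
    proof (cases "x \<in> P ` Good")
      case True
      then obtain p where p: "p \<in> Good" "x = P p" by blast
      have "c x = (\<Sum>q\<in>F'. a' q * fundI q p)" using cP p by (metis comp_apply)
      also have "\<dots> = (\<Sum>q\<in>F. a q * fund j q x)"
        unfolding F_def by (simp add: sum.reindex[OF injF] fund_P p a_def inv_f_f[OF inj_P])
      finally show ?thesis using True by (simp add: adm_set_P)
    next
      case False
      then have "c x = 0" using h by blast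
      then show ?thesis using False by (simp add: adm_set_P)
    qed
  qed
  moreover have "finite F" using fF' by (simp add: F_def)
  moreover have "\<forall>q\<in>F. in_lattice j (fst q) (snd q)" using lattice_P by (auto simp: F_def)
  ultimately show "generated_by_fund j c" unfolding generated_by_fund_def by blast
qed


lemma rel_iff_gen: "is_relation j c \<longleftrightarrow> generated_by_fund j c"
  using rel_iff gen_iff relI_genI by blast

lemma nontriv: assumes "2 \<le> card (adm_set j)" shows "\<exists>c. is_relation j c \<and> c \<noteq> (\<lambda>_. 0)"
proof -
  have inj: "inj_on P Good" using inj_P by (rule inj_on_subset) simp
  have "card Good \<ge> 2" using assms card_image[OF inj] adm_set_P by simp
  then have "\<not> (\<forall>a\<in>Good. \<forall>b\<in>Good. a = b)" using card_le_Suc0_iff_eq[OF finite_Good] by auto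
  then obtain p p' where pp: "p \<in> Good" "p' \<in> Good" "p \<noteq> p'" by blast
  define q where "q = (min (fst p) (fst p'), min (snd p) (snd p'))"
  have ne: "fst p \<noteq> fst p' \<or> snd p \<noteq> snd p'" using pp(3) by (auto simp: prod_eq_iff)
  have gq: "good q" and C: "K14 q * K23 q \<noteq> 0"
    using pp(1,2) ne unfolding mem_Good good_def Kdefs q_def by (auto simp: min_def)
  define c where "c x = (if x \<in> adm_set j then fund j (P q) x else 0)" for x
  have "generated_by_fund j c"
    unfolding generated_by_fund_def
  proof (intro exI conjI)
    show "finite {P q}" by simp
    show "\<forall>r\<in>{P q}. in_lattice j (fst r) (snd r)" using lattice_P by simp
    show "c = (\<lambda>p. if p \<in> adm_set j then (\<Sum>r\<in>{P q}. 1 * fund j r p) else 0)"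
      by (simp add: c_def fun_eq_iff)
  qed
  then have "is_relation j c" using rel_iff_gen by blast
  moreover have "c (P q) \<noteq> 0"
  proof -
    have "P q \<in> adm_set j" using gq by (simp add: adm_set_P mem_Good)
    then have "c (P q) = fundI q q" by (simp add: c_def fund_P)
    also have "\<dots> = of_int (K14 q * K23 q)" by (simp add: fundI_def prod_eq_iff)
    finally show ?thesis using C by simp
  qed
  ultimately show ?thesis by (metis)
qed

end

theorem mainTheorem7:
  fixes j :: "nat \<Rightarrow> real"
  assumes spins: "\<forall>i\<in>{1..4::nat}. 2 * j i \<in> \<nat>"
    and J_int: "Jtot j \<in> \<int>"
  shows "(2 \<le> card (adm_set j) \<longrightarrow> (\<exists>c. is_relation j c \<and> c \<noteq> (\<lambda>_. 0)))
         \<and> (\<forall>c. is_relation j c \<longleftrightarrow> generated_by_fund j c)"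
proof -
  have "2 * j 1 \<in> \<nat>" "2 * j 2 \<in> \<nat>" "2 * j 3 \<in> \<nat>" using spins by auto
  then obtain d1 d2 d3 where "2 * j 1 = real d1" "2 * j 2 = real d2" "2 * j 3 = real d3"
    by (metis Nats_cases)
  moreover obtain Ji where "Jtot j = real_of_int Ji" using J_int by (metis Ints_cases)
  ultimately interpret LL j d1 d2 d3 Ji by unfold_locales
  show ?thesis using nontriv rel_iff_gen by blast
qed

end
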